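(* Let $\lambda$ be a partition with $d$ distinct part sizes and $\lambda'$ its conjugate. For $r,s\in\{0,\dots,d\}$, \[ p_{r,s}[\lambda](t,q)=p^{\rm col}_{d+1-r,\,d-s}[\lambda'](q,t),\qquad \overline{p}_{r,s}[\lambda](t,q)=\overline{p}^{\rm col}_{d+1-r,\,d-s}[\lambda'](q,t), \] where the first subscript is read modulo $d+1$ (so $p^{\rm col}_{d+1,s}[\lambda']=p^{\rm col}_{0,s}[\lambda']$), and $f(t,q)$ denotes $f$ with $q$ and $t$ interchanged.
   Context: Partitions are Young diagrams in French convention (cells $(x,y)\in\mathbb{Z}_{>0}^2$, $x\le\lambda_y$), $\lambda'$ the conjugate; for $c=(x,y)\in\lambda$, $a_\lambda(c)=\lambda_y-x$, $\ell_\lambda(c)=\lambda'_x-y$; $n(\kappa)=\sum_{c\in\kappa}\ell_\kappa(c)$, $n'(\kappa)=\sum_{c\in\kappa}a_\kappa(c)$, $n(\rho/\kappa)=n(\rho)-n(\kappa)$, $n'(\rho/\kappa)=n'(\rho)-n'(\kappa)$. For $\kappa\subseteq\rho$, $\mathcal{R}_{\rho/\kappa}$ (resp. $\mathcal{C}_{\rho/\kappa}$): cells of $\kappa$ in a row (resp. column) containing a cell of $\rho/\kappa$. $[i,j]=1-q^it^j$. For $\kappa\lessdot\rho$ (one-cell difference): $\alpha_{\rho/\kappa}=\prod_{c\in\mathcal{R}_{\rho/\kappa}}\frac{[a_\kappa(c),\ell_\kappa(c)+1]}{[a_\rho(c),\ell_\rho(c)+1]}\prod_{c\in\mathcal{C}_{\rho/\kappa}}\frac{[a_\kappa(c)+1,\ell_\kappa(c)]}{[a_\rho(c)+1,\ell_\rho(c)]}$,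 $\overline{\alpha}_{\rho/\kappa}=\prod_{c\in\mathcal{R}_{\rho/\kappa}}\frac{[a_\kappa(c)+1,\ell_\kappa(c)]}{[a_\rho(c)+1,\ell_\rho(c)]}\prod_{c\in\mathcal{C}_{\rho/\kappa}}\frac{[a_\kappa(c),\ell_\kappa(c)+1]}{[a_\rho(c),\ell_\rho(c)+1]}$, $\beta=1/\alpha$, $\overline{\beta}=1/\overline{\alpha}$. For $\mu\lessdot\lambda\lessdot\nu$, with $A=n'(\lambda/\mu)-n'(\nu/\lambda)$, $B=n(\nu/\lambda)-n(\lambda/\mu)$: $\gamma_{\nu/\lambda/\mu}=\frac{(1-q^At^B)(1-q^{A+1}t^{B-1})}{(1-q)(1-t)}$. Probabilities: $\mathcal{P}_\lambda(\lambda\rightarrow\nu)=t^{n(\nu/\lambda)}\alpha_{\nu/\lambda}$, $\overline{\mathcal{P}}_\lambda(\lambda\leftarrow\nu)=t^{n(\nu/\lambda)}\overline{\alpha}_{\nu/\lambda}$, for $\mu\lessdot\lambda$: $\mathcal{P}_\lambda(\mu\rightarrow\nu)=t^{B-1}\alpha_{\nu/\lambda}\beta_{\lambda/\mu}/\gamma_{\nu/\lambda/\mu}$, $\overline{\mathcal{P}}_\lambda(\mu\leftarrow\nu)=t^{B-1}\overline{\alpha}_{\nu/\lambda}\overline{\beta}_{\lambda/\mu}/\gamma_{\nu/\lambda/\mu}$. If $\lambda$ has distinct part sizes $u_1>\dots>u_d>0$ with $v_i$ the multiplicity of $u_i$, set $v_{1,s}=v_1+\dots+v_s$; for $0\le s\le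 d$, $\lambda^{(+s)}$ is obtained by adding a cell in row $v_{1,s}+1$; $\lambda^{(-0)}=\lambda$, and for $1\le r\le d$, $\lambda^{(-r)}$ is obtained by removing a cell from row $v_{1,r}$. $p_{r,s}[\lambda](q,t)=\mathcal{P}_\lambda(\lambda^{(-r)}\rightarrow\lambda^{(+s)})$, $\overline{p}_{r,s}[\lambda](q,t)=\overline{\mathcal{P}}_\lambda(\lambda^{(-r)}\leftarrow\lambda^{(+s)})$, and $p^{\rm col}_{r,s}[\lambda](q,t)=p_{r,s}[\lambda](q^{-1},t^{-1})$, $\overline{p}^{\rm col}_{r,s}[\lambda](q,t)=\overline{p}_{r,s}[\lambda](q^{-1},t^{-1})$. *)

theory Defs
  imports Complex_Main
begin

text \<open>Partitions are lists of positive parts in weakly decreasing order,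
  lam = [lambda_1, lambda_2, ...].  Cells are pairs (x,y) with 1 <= y,
  1 <= x <= lambda_y (French convention: x column, y row).\<close>

definition is_partition :: "nat list \<Rightarrow> bool" where
  "is_partition lam \<longleftrightarrow> sorted_wrt (\<ge>) lam \<and> 0 \<notin> set lam"

definition part :: "nat list \<Rightarrow> nat \<Rightarrow> nat" where
  "part lam y = (if 1 \<le> y \<and> y \<le> length lam then lam ! (y - 1) else 0)"

definition conj_part :: "nat list \<Rightarrow> nat list" where
  "conj_part lam = map (\<lambda>x. length (filter (\<lambda>p. x \<le> p) lam)) [1..<Suc (Max (insert 0 (set lam)))]"

definition cells :: "nat list \<Rightarrow> (nat \<times> nat) set" where
  "cells lam = {(x, y). 1 \<le> y \<and> 1 \<le> x \<and> x \<le> part lam y}"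

definition arm :: "nat list \<Rightarrow> nat \<times> nat \<Rightarrow> int" where
  "arm lam c = int (part lam (snd c)) - int (fst c)"

definition leg :: "nat list \<Rightarrow> nat \<times> nat \<Rightarrow> int" where
  "leg lam c = int (part (conj_part lam) (fst c)) - int (snd c)"

definition nn :: "nat list \<Rightarrow> int" where
  "nn lam = (\<Sum>c\<in>cells lam. leg lam c)"

definition nn' :: "nat list \<Rightarrow> int" where
  "nn' lam = (\<Sum>c\<in>cells lam. arm lam c)"

definition br :: "real \<Rightarrow> real \<Rightarrow> int \<Rightarrow> int \<Rightarrow> real" where
  "br q t i j = 1 - q powi i * t powi j"

definition Rset :: "nat list \<Rightarrow> nat list \<Rightarrow> (nat \<times> nat) set" where
  "Rset rho kappa = {(x, y) \<in> cells kappa. \<exists>x'. (x', y) \<in> cells rho - cells kappa}"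

definition Cset :: "nat list \<Rightarrow> nat list \<Rightarrow> (nat \<times> nat) set" where
  "Cset rho kappa = {(x, y) \<in> cells kappa. \<exists>y'. (x, y') \<in> cells rho - cells kappa}"

definition alpha :: "real \<Rightarrow> real \<Rightarrow> nat list \<Rightarrow> nat list \<Rightarrow> real" where
  "alpha q t rho kappa =
    (\<Prod>c\<in>Rset rho kappa. br q t (arm kappa c) (leg kappa c + 1) / br q t (arm rho c) (leg rho c + 1)) *
    (\<Prod>c\<in>Cset rho kappa. br q t (arm kappa c + 1) (leg kappa c) / br q t (arm rho c + 1) (leg rho c))"

definition alphabar :: "real \<Rightarrow> real \<Rightarrow> nat list \<Rightarrow> nat list \<Rightarrow> real" where
  "alphabar q t rho kappa =
    (\<Prod>c\<in>Rset rho kappa. br q t (arm kappa c + 1) (leg kappa c) / br q t (arm rho c + 1) (leg rho c)) *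
    (\<Prod>c\<in>Cset rho kappa. br q t (arm kappa c) (leg kappa c + 1) / br q t (arm rho c) (leg rho c + 1))"

definition beta :: "real \<Rightarrow> real \<Rightarrow> nat list \<Rightarrow> nat list \<Rightarrow> real" where
  "beta q t rho kappa = 1 / alpha q t rho kappa"

definition betabar :: "real \<Rightarrow> real \<Rightarrow> nat list \<Rightarrow> nat list \<Rightarrow> real" where
  "betabar q t rho kappa = 1 / alphabar q t rho kappa"

definition gA :: "nat list \<Rightarrow> nat list \<Rightarrow> nat list \<Rightarrow> int" where
  "gA nu lam mu = (nn' lam - nn' mu) - (nn' nu - nn' lam)"

definition gB :: "nat list \<Rightarrow> nat list \<Rightarrow> nat list \<Rightarrow> int" where
  "gB nu lam mu = (nn nu - nn lam) - (nn lam - nn mu)"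

definition gamma :: "real \<Rightarrow> real \<Rightarrow> nat list \<Rightarrow> nat list \<Rightarrow> nat list \<Rightarrow> real" where
  "gamma q t nu lam mu =
    (1 - q powi (gA nu lam mu) * t powi (gB nu lam mu)) *
    (1 - q powi (gA nu lam mu + 1) * t powi (gB nu lam mu - 1)) / ((1 - q) * (1 - t))"

text \<open>P_lambda(lambda -> nu) and P_lambda(mu -> nu) (mu < lambda), and bar versions.\<close>
definition P0 :: "real \<Rightarrow> real \<Rightarrow> nat list \<Rightarrow> nat list \<Rightarrow> real" where
  "P0 q t lam nu = t powi (nn nu - nn lam) * alpha q t nu lam"

definition P0bar :: "real \<Rightarrow> real \<Rightarrow> nat list \<Rightarrow> nat list \<Rightarrow> real" where
  "P0bar q t lam nu = t powi (nn nu - nn lam) * alphabar q t nu lam"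

definition P1 :: "real \<Rightarrow> real \<Rightarrow> nat list \<Rightarrow> nat list \<Rightarrow> nat list \<Rightarrow> real" where
  "P1 q t lam mu nu = t powi (gB nu lam mu - 1) * alpha q t nu lam * beta q t lam mu / gamma q t nu lam mu"

definition P1bar :: "real \<Rightarrow> real \<Rightarrow> nat list \<Rightarrow> nat list \<Rightarrow> nat list \<Rightarrow> real" where
  "P1bar q t lam mu nu = t powi (gB nu lam mu - 1) * alphabar q t nu lam * betabar q t lam mu / gamma q t nu lam mu"

text \<open>Distinct part sizes u_1 > ... > u_d, and v_{1,s} = v_1 + ... + v_s.\<close>
definition usizes :: "nat list \<Rightarrow> nat list" where
  "usizes lam = rev (sorted_list_of_set (set lam))"

definition ndist :: "nat list \<Rightarrow> nat" where
  "ndist lam = card (set lam)"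

definition v1 :: "nat list \<Rightarrow> nat \<Rightarrow> nat" where
  "v1 lam s = (if s = 0 then 0 else length (filter (\<lambda>p. usizes lam ! (s - 1) \<le> p) lam))"

text \<open>Adding a cell in row y, removing a cell from row y (rows are 1-based).\<close>
definition add_cell :: "nat list \<Rightarrow> nat \<Rightarrow> nat list" where
  "add_cell lam y = (if y = length lam + 1 then lam @ [1] else lam[y - 1 := lam ! (y - 1) + 1])"

definition remove_cell :: "nat list \<Rightarrow> nat \<Rightarrow> nat list" where
  "remove_cell lam y = filter (\<lambda>p. 0 < p) (lam[y - 1 := lam ! (y - 1) - 1])"

definition lam_plus :: "nat list \<Rightarrow> nat \<Rightarrow> nat list" where
  "lam_plus lam s = add_cell lam (v1 lam s + 1)"

definition lam_minus :: "nat list \<Rightarrow> nat \<Rightarrow> nat list" where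
  "lam_minus lam r = (if r = 0 then lam else remove_cell lam (v1 lam r))"

definition prs :: "nat \<Rightarrow> nat \<Rightarrow> nat list \<Rightarrow> real \<Rightarrow> real \<Rightarrow> real" where
  "prs r s lam q t =
    (if r = 0 then P0 q t lam (lam_plus lam s)
     else P1 q t lam (lam_minus lam r) (lam_plus lam s))"

definition prsbar :: "nat \<Rightarrow> nat \<Rightarrow> nat list \<Rightarrow> real \<Rightarrow> real \<Rightarrow> real" where
  "prsbar r s lam q t =
    (if r = 0 then P0bar q t lam (lam_plus lam s)
     else P1bar q t lam (lam_minus lam r) (lam_plus lam s))"

definition prs_col :: "nat \<Rightarrow> nat \<Rightarrow> nat list \<Rightarrow> real \<Rightarrow> real \<Rightarrow> real" where
  "prs_col r s lam q t = prs r s lam (inverse q) (inverse t)"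

definition prsbar_col :: "nat \<Rightarrow> nat \<Rightarrow> nat list \<Rightarrow> real \<Rightarrow> real \<Rightarrow> real" where
  "prsbar_col r s lam q t = prsbar r s lam (inverse q) (inverse t)"

end

theory Submission
  imports Defs
begin


lemma part_0[simp]: "part lam 0 = 0" by (simp add: part_def)

lemma part_Cons: "part (a # l) y = (if y = 1 then a else part l (y - 1))"
  by (auto simp: part_def nth_Cons')

lemma part_in: "1 \<le> y \<Longrightarrow> y \<le> length lam \<Longrightarrow> part lam y \<in> set lam"
  by (simp add: part_def)

lemma part_beyond: "length lam < y \<Longrightarrow> part lam y = 0"
  by (simp add: part_def)

lemma part_pos: "is_partition lam \<Longrightarrow> 1 \<le> y \<Longrightarrow> y \<le> length lam \<Longrightarrow> 0 < part lam y"
  unfolding is_partition_def using part_in by (metis gr0I)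

lemma part_pos_iff: "is_partition lam \<Longrightarrow> 1 \<le> y \<Longrightarrow> (0 < part lam y \<longleftrightarrow> y \<le> length lam)"
  using part_pos part_beyond by (metis less_irrefl not_le)

lemma part_mono: assumes "is_partition lam" "1 \<le> y" "y \<le> y'" shows "part lam y' \<le> part lam y"
proof (cases "y' \<le> length lam")
  case True
  show ?thesis
  proof (cases "y = y'")
    case False
    then have "y - 1 < y' - 1" using assms by simp
    then have "lam ! (y' - 1) \<le> lam ! (y - 1)"
      using sorted_wrt_nth_less[of "(\<ge>)" lam "y - 1" "y' - 1"] assms True
      unfolding is_partition_def by simp
    then show ?thesis using assms True by (simp add: part_def)
  qed simp
qed (simp add: part_def)

definition NN :: "nat list \<Rightarrow> nat \<Rightarrow> nat" where
  "NN lam x = length (filter (\<lambda>p. x \<le> p) lam)"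

lemma part_conj: "1 \<le> x \<Longrightarrow> part (conj_part lam) x = NN lam x"
proof -
  assume x: "1 \<le> x"
  let ?M = "Max (insert 0 (set lam))"
  show ?thesis
  proof (cases "x \<le> ?M")
    case True
    have "[Suc 0..<Suc ?M] ! (x - Suc 0) = x" using True x by (subst nth_upt) auto
    then show ?thesis using x True by (simp add: part_def conj_part_def NN_def nth_map del: upt_Suc)
  next
    case False
    have "p \<le> ?M" if "p \<in> set lam" for p using that by (intro Max_ge) auto
    then have "filter (\<lambda>p. x \<le> p) lam = []" using False
      unfolding filter_empty_conv by (meson le_trans)
    then show ?thesis using False by (simp add: part_def conj_part_def NN_def)
  qed
qed

lemma is_partition_Cons: "is_partition (a # l) \<longleftrightarrow> is_partition l \<and> 0 < a \<and> (\<forall>p\<in>set l. p \<le> a)"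
  unfolding is_partition_def by auto

lemma galois: "is_partition lam \<Longrightarrow> 1 \<le> x \<Longrightarrow> 1 \<le> z \<Longrightarrow> (z \<le> NN lam x \<longleftrightarrow> x \<le> part lam z)"
proof (induction lam arbitrary: z)
  case Nil
  then show ?case by (simp add: NN_def part_def)
next
  case (Cons a l)
  have pl: "is_partition l" and le: "\<forall>p\<in>set l. p \<le> a" using Cons.prems is_partition_Cons by auto
  show ?case
  proof (cases "x \<le> a")
    case True
    then have N: "NN (a # l) x = Suc (NN l x)" by (simp add: NN_def)
    show ?thesis
    proof (cases "z = 1")
      case True then show ?thesis using N \<open>x \<le> a\<close> by (simp add: part_Cons)
    next
      case False
      then have "z - 1 \<ge> 1" using Cons.prems by simp
      have "z \<le> Suc (NN l x) \<longleftrightarrow> z - 1 \<le> NN l x" using Cons.prems by arith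
      with Cons.IH[OF pl Cons.prems(2) \<open>z - 1 \<ge> 1\<close>] False
      show ?thesis using N by (simp add: part_Cons)
    qed
  next
    case False
    then have "filter (\<lambda>p. x \<le> p) l = []" using le by (auto simp: filter_empty_conv)
    then have N: "NN (a # l) x = 0" using False by (simp add: NN_def)
    have "part l (z - 1) \<le> a"
    proof (cases "1 \<le> z - 1 \<and> z - 1 \<le> length l")
      case True then show ?thesis using le part_in[of "z - 1" l] by blast
    next
      case False then show ?thesis by (auto simp: part_def)
    qed
    then show ?thesis using N False Cons.prems by (auto simp: part_Cons)
  qed
qed

lemma nat_eq_ge1: "(\<And>z::nat. 1 \<le> z \<Longrightarrow> (z \<le> a \<longleftrightarrow> z \<le> b)) \<Longrightarrow> a = b"
  by (metis One_nat_def le_antisym le_refl nat_le_linear not_less_eq_eq le_zero_eq Suc_leI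
      less_eq_Suc_le  not_one_le_zero linorder_neqE_nat)

lemma conj_partition: "is_partition (conj_part lam)"
proof -
  let ?M = "Max (insert 0 (set lam))"
  have mono: "NN lam y \<le> NN lam x" if "x \<le> y" for x y
    unfolding NN_def using that
    by (induction lam) auto
  have sorted: "sorted_wrt (\<ge>) (conj_part lam)"
    unfolding conj_part_def sorted_wrt_map
    by (rule sorted_wrt_mono_rel[OF _ sorted_wrt_upt]) (auto intro: mono[unfolded NN_def] simp del: upt_Suc)
  have "0 < NN lam x" if "1 \<le> x" "x \<le> ?M" for x
  proof -
    have "?M \<noteq> 0" using that by simp
    then have "?M \<in> set lam" using Max_in[of "insert 0 (set lam)"]  by auto
    then show ?thesis using that unfolding NN_def by (auto simp: filter_empty_conv length_greater_0_conv[symmetric] simp del: length_greater_0_conv)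
  qed
  then have "0 \<notin> set (conj_part lam)" unfolding conj_part_def NN_def[symmetric]
    by (fastforce simp: less_Suc_eq_le simp del: Max_insert upt_Suc)
  with sorted show ?thesis unfolding is_partition_def by simp
qed



lemma galois_conj: "is_partition lam \<Longrightarrow> 1 \<le> x \<Longrightarrow> 1 \<le> z \<Longrightarrow> (z \<le> part (conj_part lam) x \<longleftrightarrow> x \<le> part lam z)"
  using galois part_conj by simp

lemma conj_conj: assumes "is_partition lam" shows "part (conj_part (conj_part lam)) = part lam"
proof
  fix y show "part (conj_part (conj_part lam)) y = part lam y"
  proof (cases "y = 0")
    case False
    show ?thesis
    proof (rule nat_eq_ge1)
      fix z :: nat assume z: "1 \<le> z"
      have "z \<le> part (conj_part (conj_part lam)) y \<longleftrightarrow> y \<le> part (conj_part lam) z"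
        using galois_conj[OF conj_partition, of y z lam] False z by simp
      also have "\<dots> \<longleftrightarrow> z \<le> part lam y" using galois_conj[OF assms z, of y] False by simp
      finally show "z \<le> part (conj_part (conj_part lam)) y \<longleftrightarrow> z \<le> part lam y" .
    qed
  qed simp
qed

lemma mem_swap_image: "(a, b) \<in> prod.swap ` A \<longleftrightarrow> (b, a) \<in> A"
  by force

lemma cells_conj: assumes "is_partition lam" shows "cells (conj_part lam) = prod.swap ` cells lam"
proof -
  have "(x, y) \<in> cells (conj_part lam) \<longleftrightarrow> (y, x) \<in> cells lam" for x y
    using galois_conj[OF assms, of y x] by (auto simp: cells_def)
  then show ?thesis by (auto simp: mem_swap_image)
qed

lemma arm_conj: "arm (conj_part lam) (prod.swap c) = leg lam c"
  by (simp add: arm_def leg_def)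

lemma leg_conj: "is_partition lam \<Longrightarrow> leg (conj_part lam) (prod.swap c) = arm lam c"
  by (simp add: arm_def leg_def conj_conj)

lemma nn_conj: "is_partition lam \<Longrightarrow> nn (conj_part lam) = nn' lam"
  unfolding nn_def nn'_def
  by (simp add: cells_conj sum.reindex leg_conj del: swap_simp)

lemma nn'_conj: "is_partition lam \<Longrightarrow> nn' (conj_part lam) = nn lam"
  unfolding nn_def nn'_def
  by (simp add: cells_conj sum.reindex arm_conj del: swap_simp)

lemma Rset_conj: "is_partition rho \<Longrightarrow> is_partition kappa \<Longrightarrow>
   Rset (conj_part rho) (conj_part kappa) = prod.swap ` Cset rho kappa"
  unfolding Rset_def Cset_def by (auto simp: cells_conj mem_swap_image)

lemma Cset_conj: "is_partition rho \<Longrightarrow> is_partition kappa \<Longrightarrow>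
   Cset (conj_part rho) (conj_part kappa) = prod.swap ` Rset rho kappa"
  unfolding Rset_def Cset_def by (auto simp: cells_conj mem_swap_image)

lemma part_le_Max: "part lam y \<le> Max (insert 0 (set lam))"
  by (cases "1 \<le> y \<and> y \<le> length lam") (auto simp: part_def intro!: Max_ge simp del: Max_insert)

lemma finite_cells: "finite (cells lam)"
proof -
  have "cells lam \<subseteq> {..Max (insert 0 (set lam))} \<times> {..length lam}"
  proof
    fix c assume c: "c \<in> cells lam"
    obtain x y where xy: "c = (x, y)" by fastforce
    have "x \<le> part lam y" "1 \<le> x" using c xy by (auto simp: cells_def)
    then have "x \<le> Max (insert 0 (set lam))" using part_le_Max[of lam y] by linarith
    moreover have "y \<le> length lam"
    proof (rule ccontr)
      assume "\<not> y \<le> length lam"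
      then have "part lam y = 0" by (simp add: part_def)
      with \<open>x \<le> part lam y\<close> \<open>1 \<le> x\<close> show False by simp
    qed
    ultimately show "c \<in> {..Max (insert 0 (set lam))} \<times> {..length lam}" using xy by simp
  qed
  then show ?thesis by (rule finite_subset) simp
qed

lemma list_eq_part: assumes "0 \<notin> set a" "0 \<notin> set b" "part a = part b" shows "a = b"
proof -
  have pa: "0 < part a y \<longleftrightarrow> 1 \<le> y \<and> y \<le> length a" for y
  proof -
    have "1 \<le> y \<Longrightarrow> y \<le> length a \<Longrightarrow> a ! (y - 1) \<noteq> 0"
      using assms(1) nth_mem[of "y - 1" a] by (metis diff_less le_less_trans zero_less_one less_le_trans)
    then show ?thesis by (auto simp: part_def)
  qed
  have pb: "0 < part b y \<longleftrightarrow> 1 \<le> y \<and> y \<le> length b" for y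
  proof -
    have "1 \<le> y \<Longrightarrow> y \<le> length b \<Longrightarrow> b ! (y - 1) \<noteq> 0"
      using assms(2) nth_mem[of "y - 1" b] by (metis diff_less le_less_trans zero_less_one less_le_trans)
    then show ?thesis by (auto simp: part_def)
  qed
  have len: "length a = length b"
    using pa[of "length a"] pb[of "length a"] pa[of "length b"] pb[of "length b"] assms(3)
    by (cases "length a = 0"; cases "length b = 0") auto
  have "a ! i = b ! i" if "i < length a" for i
    using fun_cong[OF assms(3), of "Suc i"] that len by (simp add: part_def)
  with len show ?thesis by (simp add: list_eq_iff_nth_eq)
qed

lemma partition_zero_free: "is_partition a \<Longrightarrow> 0 \<notin> set a"
  by (simp add: is_partition_def)



lemma br_ratio:
  fixes q t :: real
  assumes "q \<noteq> 0" "t \<noteq> 0"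
  shows "br (inverse q) (inverse t) i1 j1 / br (inverse q) (inverse t) i2 j2
       = br t q j1 i1 / br t q j2 i2 * (q powi (i2 - i1) * t powi (j2 - j1))"
proof -
  define a1 where "a1 = q powi i1"
  define a2 where "a2 = q powi i2"
  define b1 where "b1 = t powi j1"
  define b2 where "b2 = t powi j2"
  have nz: "a1 \<noteq> 0" "a2 \<noteq> 0" "b1 \<noteq> 0" "b2 \<noteq> 0" using assms by (auto simp: a1_def a2_def b1_def b2_def)
  have e1: "q powi (i2 - i1) = a2 / a1" using assms by (simp add: a1_def a2_def power_int_diff)
  have e2: "t powi (j2 - j1) = b2 / b1" using assms by (simp add: b1_def b2_def power_int_diff)
  have l: "br (inverse q) (inverse t) i1 j1 / br (inverse q) (inverse t) i2 j2
     = (1 - inverse a1 * inverse b1) / (1 - inverse a2 * inverse b2)"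
    by (simp add: br_def power_int_inverse a1_def a2_def b1_def b2_def)
  have r: "br t q j1 i1 / br t q j2 i2 = (1 - a1 * b1) / (1 - a2 * b2)"
    by (simp add: br_def a1_def a2_def b1_def b2_def mult.commute)
  show ?thesis unfolding l r e1 e2 using nz
    by (cases "1 - a2 * b2 = 0") (auto simp: field_simps)
qed



definition wt :: "real \<Rightarrow> real \<Rightarrow> nat list \<Rightarrow> nat list \<Rightarrow> nat \<times> nat \<Rightarrow> real" where
  "wt q t rho kappa c = q powi (leg rho c - leg kappa c) * t powi (arm rho c - arm kappa c)"

lemma inj_swap: "inj_on prod.swap A" by (metis inj_on_inverseI swap_swap)

lemma alpha_conj:
  fixes q t :: real
  assumes "q \<noteq> 0" "t \<noteq> 0" "is_partition rho" "is_partition kappa"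
  shows "alpha (inverse q) (inverse t) (conj_part rho) (conj_part kappa)
       = alpha t q rho kappa * ((\<Prod>c\<in>Rset rho kappa. wt q t rho kappa c) * (\<Prod>c\<in>Cset rho kappa. wt q t rho kappa c))"
proof -
  have A: "br (inverse q) (inverse t) (leg kappa c) (arm kappa c + 1) / br (inverse q) (inverse t) (leg rho c) (arm rho c + 1)
      = br t q (arm kappa c + 1) (leg kappa c) / br t q (arm rho c + 1) (leg rho c) * wt q t rho kappa c" for c
    using br_ratio[OF assms(1,2)] by (simp add: wt_def)
  have B: "br (inverse q) (inverse t) (leg kappa c + 1) (arm kappa c) / br (inverse q) (inverse t) (leg rho c + 1) (arm rho c)
      = br t q (arm kappa c) (leg kappa c + 1) / br t q (arm rho c) (leg rho c + 1) * wt q t rho kappa c" for c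
    using br_ratio[OF assms(1,2)] by (simp add: wt_def)
  have L: "alpha (inverse q) (inverse t) (conj_part rho) (conj_part kappa)
     = (\<Prod>c\<in>Cset rho kappa. br (inverse q) (inverse t) (leg kappa c) (arm kappa c + 1) / br (inverse q) (inverse t) (leg rho c) (arm rho c + 1)) * (\<Prod>c\<in>Rset rho kappa. br (inverse q) (inverse t) (leg kappa c + 1) (arm kappa c) / br (inverse q) (inverse t) (leg rho c + 1) (arm rho c))"
    unfolding alpha_def Rset_conj[OF assms(3,4)] Cset_conj[OF assms(3,4)]
    by (simp add: prod.reindex[OF inj_swap] arm_conj leg_conj assms(3,4) del: swap_simp)
  also have "\<dots> = (\<Prod>c\<in>Cset rho kappa. (br t q (arm kappa c + 1) (leg kappa c) / br t q (arm rho c + 1) (leg rho c)) * wt q t rho kappa c) * (\<Prod>c\<in>Rset rho kappa. (br t q (arm kappa c) (leg kappa c + 1) / br t q (arm rho c) (leg rho c + 1)) * wt q t rho kappa c)"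
    by (simp only: A B)
  finally show ?thesis unfolding alpha_def prod.distrib by (simp only: mult_ac)
qed

lemma alphabar_conj:
  fixes q t :: real
  assumes "q \<noteq> 0" "t \<noteq> 0" "is_partition rho" "is_partition kappa"
  shows "alphabar (inverse q) (inverse t) (conj_part rho) (conj_part kappa)
       = alphabar t q rho kappa * ((\<Prod>c\<in>Rset rho kappa. wt q t rho kappa c) * (\<Prod>c\<in>Cset rho kappa. wt q t rho kappa c))"
proof -
  have A: "br (inverse q) (inverse t) (leg kappa c) (arm kappa c + 1) / br (inverse q) (inverse t) (leg rho c) (arm rho c + 1)
      = br t q (arm kappa c + 1) (leg kappa c) / br t q (arm rho c + 1) (leg rho c) * wt q t rho kappa c" for c
    using br_ratio[OF assms(1,2)] by (simp add: wt_def)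
  have B: "br (inverse q) (inverse t) (leg kappa c + 1) (arm kappa c) / br (inverse q) (inverse t) (leg rho c + 1) (arm rho c)
      = br t q (arm kappa c) (leg kappa c + 1) / br t q (arm rho c) (leg rho c + 1) * wt q t rho kappa c" for c
    using br_ratio[OF assms(1,2)] by (simp add: wt_def)
  have L: "alphabar (inverse q) (inverse t) (conj_part rho) (conj_part kappa)
     = (\<Prod>c\<in>Cset rho kappa. br (inverse q) (inverse t) (leg kappa c + 1) (arm kappa c) / br (inverse q) (inverse t) (leg rho c + 1) (arm rho c)) * (\<Prod>c\<in>Rset rho kappa. br (inverse q) (inverse t) (leg kappa c) (arm kappa c + 1) / br (inverse q) (inverse t) (leg rho c) (arm rho c + 1))"
    unfolding alphabar_def Rset_conj[OF assms(3,4)] Cset_conj[OF assms(3,4)]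
    by (simp add: prod.reindex[OF inj_swap] arm_conj leg_conj assms(3,4) del: swap_simp)
  also have "\<dots> = (\<Prod>c\<in>Cset rho kappa. (br t q (arm kappa c) (leg kappa c + 1) / br t q (arm rho c) (leg rho c + 1)) * wt q t rho kappa c) * (\<Prod>c\<in>Rset rho kappa. (br t q (arm kappa c + 1) (leg kappa c) / br t q (arm rho c + 1) (leg rho c)) * wt q t rho kappa c)"
    by (simp only: B A)
  finally show ?thesis unfolding alphabar_def prod.distrib by (simp only: mult_ac)
qed



lemma prod_powi_sum: fixes x :: real assumes "x \<noteq> 0"
  shows "(\<Prod>a\<in>A. x powi f a) = x powi (\<Sum>a\<in>A. f a)"
proof (cases "finite A")
  case True then show ?thesis
    by (induction A rule: finite_induct) (simp_all add: power_int_add assms)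
qed simp

locale onecell =
  fixes lam nu :: "nat list" and y0 :: nat
  assumes pl: "is_partition lam" and pn: "is_partition nu" and y0: "1 \<le> y0"
    and pnu: "part nu = (part lam)(y0 := Suc (part lam y0))"
begin

definition "x0 = Suc (part lam y0)"

lemma pnu': "part nu z = (if z = y0 then x0 else part lam z)"
  using pnu by (simp add: x0_def)

lemma cells_nu: "cells nu = insert (x0, y0) (cells lam)"
  using y0 by (auto simp: cells_def pnu' x0_def split: if_splits)

lemma c0_notin: "(x0, y0) \<notin> cells lam"
  by (simp add: cells_def x0_def)

lemma N_other: assumes "1 \<le> x" "x \<noteq> x0" shows "part (conj_part nu) x = part (conj_part lam) x"
proof (rule nat_eq_ge1)
  fix z :: nat assume z: "1 \<le> z"
  have "z \<le> part (conj_part nu) x \<longleftrightarrow> x \<le> part nu z" using galois_conj[OF pn assms(1) z] .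
  also have "\<dots> \<longleftrightarrow> x \<le> part lam z" using assms(2) by (auto simp: pnu' x0_def)
  also have "\<dots> \<longleftrightarrow> z \<le> part (conj_part lam) x" using galois_conj[OF pl assms(1) z] by simp
  finally show "z \<le> part (conj_part nu) x \<longleftrightarrow> z \<le> part (conj_part lam) x" .
qed

lemma N_nu_x0: "part (conj_part nu) x0 = y0"
proof (rule nat_eq_ge1)
  fix z :: nat assume z: "1 \<le> z"
  have "z \<le> part (conj_part nu) x0 \<longleftrightarrow> x0 \<le> part nu z" using galois_conj[OF pn _ z] by (simp add: x0_def)
  also have "\<dots> \<longleftrightarrow> z \<le> y0"
  proof
    assume "x0 \<le> part nu z"
    show "z \<le> y0"
    proof (rule ccontr)
      assume "\<not> z \<le> y0"
      then have "part lam z \<le> part lam y0" using part_mono[OF pl y0] by simp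
      then show False using \<open>x0 \<le> part nu z\<close> \<open>\<not> z \<le> y0\<close> by (simp add: pnu' x0_def)
    qed
  next
    assume "z \<le> y0"
    then have "part nu y0 \<le> part nu z" using part_mono[OF pn z] by simp
    then show "x0 \<le> part nu z" by (simp add: pnu')
  qed
  finally show "z \<le> part (conj_part nu) x0 \<longleftrightarrow> z \<le> y0" .
qed

lemma N_lam_x0: "part (conj_part lam) x0 = y0 - 1"
proof (rule nat_eq_ge1)
  fix z :: nat assume z: "1 \<le> z"
  have "z \<le> part (conj_part lam) x0 \<longleftrightarrow> x0 \<le> part lam z" using galois_conj[OF pl _ z] by (simp add: x0_def)
  also have "\<dots> \<longleftrightarrow> z \<le> y0 - 1"
  proof
    assume "x0 \<le> part lam z"
    show "z \<le> y0 - 1"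
    proof (rule ccontr)
      assume "\<not> z \<le> y0 - 1"
      then have "part lam z \<le> part lam y0" using part_mono[OF pl y0] by simp
      then show False using \<open>x0 \<le> part lam z\<close> by (simp add: x0_def)
    qed
  next
    assume a: "z \<le> y0 - 1"
    then have "part nu y0 \<le> part nu z" using part_mono[OF pn z] by simp
    then show "x0 \<le> part lam z" using a y0 by (simp add: pnu' split: if_splits)
  qed
  finally show "z \<le> part (conj_part lam) x0 \<longleftrightarrow> z \<le> y0 - 1" .
qed

lemma conj_nu: "part (conj_part nu) = (part (conj_part lam))(x0 := Suc (part (conj_part lam) x0))"
proof
  fix x show "part (conj_part nu) x = ((part (conj_part lam))(x0 := Suc (part (conj_part lam) x0))) x"
  proof (cases "x = 0")
    case True then show ?thesis by (simp add: x0_def)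
  next
    case False
    then show ?thesis using N_other[of x] N_nu_x0 N_lam_x0 y0 by auto
  qed
qed

lemma leg_same: assumes "c \<in> cells lam" "fst c \<noteq> x0" shows "leg nu c = leg lam c"
proof -
  have "1 \<le> fst c" using assms(1) by (auto simp: cells_def)
  then show ?thesis using N_other[OF _ assms(2)] by (simp add: leg_def)
qed

lemma arm_same: "snd c \<noteq> y0 \<Longrightarrow> arm nu c = arm lam c"
  by (auto simp: arm_def pnu')

lemma leg_c0: "leg nu (x0, y0) = 0" by (simp add: leg_def N_nu_x0)
lemma arm_c0: "arm nu (x0, y0) = 0" by (simp add: arm_def pnu')

lemma diff_cells: "cells nu - cells lam = {(x0, y0)}"
  unfolding cells_nu using c0_notin by blast

lemma Rset_eq: "Rset nu lam = {c \<in> cells lam. snd c = y0}"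
proof -
  have "(x, y) \<in> Rset nu lam \<longleftrightarrow> (x, y) \<in> cells lam \<and> y = y0" for x y
    unfolding Rset_def diff_cells by simp
  then show ?thesis by auto
qed

lemma Cset_eq: "Cset nu lam = {c \<in> cells lam. fst c = x0}"
proof -
  have "(x, y) \<in> Cset nu lam \<longleftrightarrow> (x, y) \<in> cells lam \<and> x = x0" for x y
    unfolding Cset_def diff_cells by simp
  then show ?thesis by auto
qed

lemma nn_diff: "nn nu - nn lam = (\<Sum>c\<in>cells lam. leg nu c - leg lam c)"
  unfolding nn_def cells_nu using c0_notin finite_cells[of lam]
  by (simp add: leg_c0 sum_subtractf)

lemma nn'_diff: "nn' nu - nn' lam = (\<Sum>c\<in>cells lam. arm nu c - arm lam c)"
  unfolding nn'_def cells_nu using c0_notin finite_cells[of lam]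
  by (simp add: arm_c0 sum_subtractf)

lemma W: fixes q t :: real assumes "q \<noteq> 0" "t \<noteq> 0"
  shows "(\<Prod>c\<in>Rset nu lam. wt q t nu lam c) * (\<Prod>c\<in>Cset nu lam. wt q t nu lam c)
      = q powi (nn nu - nn lam) * t powi (nn' nu - nn' lam)"
proof -
  have fin: "finite (cells lam)" by (rule finite_cells)
  have disj: "Rset nu lam \<inter> Cset nu lam = {}" unfolding Rset_eq Cset_eq using c0_notin by auto
  have "(\<Prod>c\<in>Rset nu lam. wt q t nu lam c) * (\<Prod>c\<in>Cset nu lam. wt q t nu lam c)
      = (\<Prod>c\<in>Rset nu lam \<union> Cset nu lam. wt q t nu lam c)"
    by (rule prod.union_disjoint[symmetric]) (use fin disj in \<open>auto simp: Rset_eq Cset_eq\<close>)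
  also have "\<dots> = (\<Prod>c\<in>cells lam. wt q t nu lam c)"
  proof (rule prod.mono_neutral_left[OF fin])
    show "Rset nu lam \<union> Cset nu lam \<subseteq> cells lam" by (auto simp: Rset_eq Cset_eq)
    show "\<forall>i\<in>cells lam - (Rset nu lam \<union> Cset nu lam). wt q t nu lam i = 1"
      by (auto simp: Rset_eq Cset_eq wt_def leg_same arm_same)
  qed
  also have "\<dots> = q powi (\<Sum>c\<in>cells lam. leg nu c - leg lam c) * t powi (\<Sum>c\<in>cells lam. arm nu c - arm lam c)"
    unfolding wt_def prod.distrib prod_powi_sum[OF assms(1)] prod_powi_sum[OF assms(2)] ..
  finally show ?thesis by (simp add: nn_diff nn'_diff)
qed

end



lemma P0_conj:
  fixes q t :: real
  assumes oc: "onecell lam nu y0" and q: "q \<noteq> 0" and t: "t \<noteq> 0"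
  shows "P0 (inverse q) (inverse t) (conj_part lam) (conj_part nu) = P0 t q lam nu"
proof -
  interpret onecell lam nu y0 by (rule oc)
  have "P0 (inverse q) (inverse t) (conj_part lam) (conj_part nu)
     = inverse (t powi (nn' nu - nn' lam)) * (alpha t q nu lam * (q powi (nn nu - nn lam) * t powi (nn' nu - nn' lam)))"
    unfolding P0_def nn_conj[OF pl] nn_conj[OF pn] alpha_conj[OF q t pn pl] W[OF q t]
    by (simp add: power_int_inverse)
  also have "\<dots> = P0 t q lam nu" using t by (simp add: P0_def field_simps)
  finally show ?thesis .
qed

lemma P0bar_conj:
  fixes q t :: real
  assumes oc: "onecell lam nu y0" and q: "q \<noteq> 0" and t: "t \<noteq> 0"
  shows "P0bar (inverse q) (inverse t) (conj_part lam) (conj_part nu) = P0bar t q lam nu"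
proof -
  interpret onecell lam nu y0 by (rule oc)
  have "P0bar (inverse q) (inverse t) (conj_part lam) (conj_part nu)
     = inverse (t powi (nn' nu - nn' lam)) * (alphabar t q nu lam * (q powi (nn nu - nn lam) * t powi (nn' nu - nn' lam)))"
    unfolding P0bar_def nn_conj[OF pl] nn_conj[OF pn] alphabar_conj[OF q t pn pl] W[OF q t]
    by (simp add: power_int_inverse)
  also have "\<dots> = P0bar t q lam nu" using t by (simp add: P0bar_def field_simps)
  finally show ?thesis .
qed

lemma gamma_conj:
  fixes q t :: real
  assumes pm: "is_partition mu" and pl: "is_partition lam" and pn: "is_partition nu"
    and q: "q \<noteq> 0" "q \<noteq> 1" and t: "t \<noteq> 0" "t \<noteq> 1"
  shows "gamma (inverse q) (inverse t) (conj_part nu) (conj_part lam) (conj_part mu) = q * t * gamma t q nu lam mu"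
proof -
  define A where "A = gA nu lam mu"
  define B where "B = gB nu lam mu"
  have gA': "gA (conj_part nu) (conj_part lam) (conj_part mu) = - B"
    unfolding B_def gA_def gB_def nn'_conj[OF pm] nn'_conj[OF pl] nn'_conj[OF pn] by simp
  have gB': "gB (conj_part nu) (conj_part lam) (conj_part mu) = - A"
    unfolding A_def gA_def gB_def nn_conj[OF pm] nn_conj[OF pl] nn_conj[OF pn] by simp
  define a where "a = q powi B"
  define b where "b = t powi A"
  have anz: "a \<noteq> 0" "b \<noteq> 0" using q t by (auto simp: a_def b_def)
  have e1: "inverse q powi (- B) = a" by (simp add: a_def power_int_inverse power_int_minus)
  have e2: "inverse t powi (- A) = b" by (simp add: b_def power_int_inverse power_int_minus)
  have e3: "inverse q powi (- B + 1) = inverse q * a"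
    using q by (subst power_int_add) (auto simp: e1 simp del: power_int_inverse)
  have e4: "inverse t powi (- A - 1) = t * b"
  proof -
    have m: "-A - 1 = -(A+1)" by simp
    have "inverse t powi (-A - 1) = t powi (A + 1)"
      by (simp only: m power_int_inverse power_int_minus inverse_inverse_eq)
    also have "\<dots> = t * b" using t by (simp add: b_def power_int_add)
    finally show ?thesis .
  qed
  have e5: "q powi (B - 1) = a / q" using q by (simp add: a_def power_int_diff)
  have e6: "t powi (A + 1) = b * t" using t by (simp add: b_def power_int_add)
  show ?thesis
    unfolding gamma_def gA' gB' e1 e2 e3 e4 A_def[symmetric] B_def[symmetric] e5 e6
    unfolding a_def[symmetric] b_def[symmetric]
    using q t anz by (simp add: field_simps)
qed

lemma P1_conj:
  fixes q t :: real
  assumes oc1: "onecell mu lam y1" and oc0: "onecell lam nu y0"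
    and q: "q \<noteq> 0" "q \<noteq> 1" and t: "t \<noteq> 0" "t \<noteq> 1"
  shows "P1 (inverse q) (inverse t) (conj_part lam) (conj_part mu) (conj_part nu) = P1 t q lam mu nu"
proof -
  have pm: "is_partition mu" and pl: "is_partition lam" and pn: "is_partition nu"
    using oc1 oc0 onecell.pl onecell.pn by blast+
  define a1 where "a1 = nn nu - nn lam"
  define b1 where "b1 = nn' nu - nn' lam"
  define a2 where "a2 = nn lam - nn mu"
  define b2 where "b2 = nn' lam - nn' mu"
  define X where "X = alpha t q nu lam"
  define Y where "Y = alpha t q lam mu"
  define G where "G = gamma t q nu lam mu"
  have W1: "(\<Prod>c\<in>Rset nu lam. wt q t nu lam c) * (\<Prod>c\<in>Cset nu lam. wt q t nu lam c) = q powi a1 * t powi b1"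
    using onecell.W[OF oc0 q(1) t(1)] by (simp add: a1_def b1_def)
  have W2: "(\<Prod>c\<in>Rset lam mu. wt q t lam mu c) * (\<Prod>c\<in>Cset lam mu. wt q t lam mu c) = q powi a2 * t powi b2"
    using onecell.W[OF oc1 q(1) t(1)] by (simp add: a2_def b2_def)
  have gB': "gB (conj_part nu) (conj_part lam) (conj_part mu) = - (b2 - b1)"
    unfolding b1_def b2_def gB_def nn_conj[OF pm] nn_conj[OF pl] nn_conj[OF pn] by simp
  have gB: "gB nu lam mu = a1 - a2" by (simp add: gB_def a1_def a2_def)
  have L: "P1 (inverse q) (inverse t) (conj_part lam) (conj_part mu) (conj_part nu)
     = inverse t powi (- (b2 - b1) - 1) * (X * (q powi a1 * t powi b1)) * (1 / (Y * (q powi a2 * t powi b2))) / (q * t * G)"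
    unfolding P1_def gB' beta_def alpha_conj[OF q(1) t(1) pn pl] alpha_conj[OF q(1) t(1) pl pm] W1 W2
      gamma_conj[OF pm pl pn q t] X_def Y_def G_def ..
  have R: "P1 t q lam mu nu = q powi (a1 - a2 - 1) * X * (1 / Y) / G"
    unfolding P1_def gB beta_def X_def Y_def G_def ..
  have e1: "inverse t powi (- (b2 - b1) - 1) = t powi b2 * t / t powi b1"
  proof -
    have m: "- (b2 - b1) - 1 = -((b2 - b1) + 1)" by simp
    have "inverse t powi (- (b2 - b1) - 1) = t powi ((b2 - b1) + 1)"
      by (simp only: m power_int_inverse power_int_minus inverse_inverse_eq)
    also have "\<dots> = t powi b2 * t / t powi b1" using t by (simp add: power_int_add power_int_diff)
    finally show ?thesis .
  qed
  have e2: "q powi (a1 - a2 - 1) = q powi a1 / q powi a2 / q" using q by (simp add: power_int_diff)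
  have nz: "q powi a1 \<noteq> 0" "q powi a2 \<noteq> 0" "t powi b1 \<noteq> 0" "t powi b2 \<noteq> 0" using q t by auto
  show ?thesis unfolding L R e1 e2 using nz q t
    by (cases "Y = 0"; cases "G = 0") (simp_all add: field_simps)
qed

lemma P1bar_conj:
  fixes q t :: real
  assumes oc1: "onecell mu lam y1" and oc0: "onecell lam nu y0"
    and q: "q \<noteq> 0" "q \<noteq> 1" and t: "t \<noteq> 0" "t \<noteq> 1"
  shows "P1bar (inverse q) (inverse t) (conj_part lam) (conj_part mu) (conj_part nu) = P1bar t q lam mu nu"
proof -
  have pm: "is_partition mu" and pl: "is_partition lam" and pn: "is_partition nu"
    using oc1 oc0 onecell.pl onecell.pn by blast+
  define a1 where "a1 = nn nu - nn lam"
  define b1 where "b1 = nn' nu - nn' lam"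
  define a2 where "a2 = nn lam - nn mu"
  define b2 where "b2 = nn' lam - nn' mu"
  define X where "X = alphabar t q nu lam"
  define Y where "Y = alphabar t q lam mu"
  define G where "G = gamma t q nu lam mu"
  have W1: "(\<Prod>c\<in>Rset nu lam. wt q t nu lam c) * (\<Prod>c\<in>Cset nu lam. wt q t nu lam c) = q powi a1 * t powi b1"
    using onecell.W[OF oc0 q(1) t(1)] by (simp add: a1_def b1_def)
  have W2: "(\<Prod>c\<in>Rset lam mu. wt q t lam mu c) * (\<Prod>c\<in>Cset lam mu. wt q t lam mu c) = q powi a2 * t powi b2"
    using onecell.W[OF oc1 q(1) t(1)] by (simp add: a2_def b2_def)
  have gB': "gB (conj_part nu) (conj_part lam) (conj_part mu) = - (b2 - b1)"
    unfolding b1_def b2_def gB_def nn_conj[OF pm] nn_conj[OF pl] nn_conj[OF pn] by simp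
  have gB: "gB nu lam mu = a1 - a2" by (simp add: gB_def a1_def a2_def)
  have L: "P1bar (inverse q) (inverse t) (conj_part lam) (conj_part mu) (conj_part nu)
     = inverse t powi (- (b2 - b1) - 1) * (X * (q powi a1 * t powi b1)) * (1 / (Y * (q powi a2 * t powi b2))) / (q * t * G)"
    unfolding P1bar_def gB' betabar_def alphabar_conj[OF q(1) t(1) pn pl] alphabar_conj[OF q(1) t(1) pl pm] W1 W2
      gamma_conj[OF pm pl pn q t] X_def Y_def G_def ..
  have R: "P1bar t q lam mu nu = q powi (a1 - a2 - 1) * X * (1 / Y) / G"
    unfolding P1bar_def gB betabar_def X_def Y_def G_def ..
  have e1: "inverse t powi (- (b2 - b1) - 1) = t powi b2 * t / t powi b1"
  proof -
    have m: "- (b2 - b1) - 1 = -((b2 - b1) + 1)" by simp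
    have "inverse t powi (- (b2 - b1) - 1) = t powi ((b2 - b1) + 1)"
      by (simp only: m power_int_inverse power_int_minus inverse_inverse_eq)
    also have "\<dots> = t powi b2 * t / t powi b1" using t by (simp add: power_int_add power_int_diff)
    finally show ?thesis .
  qed
  have e2: "q powi (a1 - a2 - 1) = q powi a1 / q powi a2 / q" using q by (simp add: power_int_diff)
  have nz: "q powi a1 \<noteq> 0" "q powi a2 \<noteq> 0" "t powi b1 \<noteq> 0" "t powi b2 \<noteq> 0" using q t by auto
  show ?thesis unfolding L R e1 e2 using nz q t
    by (cases "Y = 0"; cases "G = 0") (simp_all add: field_simps)
qed



lemma NN_anti: "x \<le> y \<Longrightarrow> NN lam y \<le> NN lam x"
  unfolding NN_def by (induction lam) auto

lemma NN_le: "NN lam x \<le> length lam"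
  unfolding NN_def by simp

lemma part_update: "1 \<le> y \<Longrightarrow> y \<le> length lam \<Longrightarrow> part (lam[y - 1 := v]) = (part lam)(y := v)"
  by (auto simp: part_def fun_eq_iff nth_list_update)

lemma partition_of_part:
  assumes "0 \<notin> set L" "\<And>y. 1 \<le> y \<Longrightarrow> part L (Suc y) \<le> part L y"
  shows "is_partition L"
proof -
  have "transp ((\<ge>) :: nat \<Rightarrow> nat \<Rightarrow> bool)" by (auto simp: transp_def)
  moreover have "L ! Suc i \<le> L ! i" if "Suc i < length L" for i
    using assms(2)[of "Suc i"] that by (simp add: part_def)
  ultimately have "sorted_wrt (\<ge>) L" by (simp add: sorted_wrt_iff_nth_Suc_transp)
  with assms(1) show ?thesis by (simp add: is_partition_def)
qed

lemma add_cell_part: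
  assumes "is_partition lam" "1 \<le> y" "y \<le> length lam + 1"
  shows "part (add_cell lam y) = (part lam)(y := Suc (part lam y))"
proof (cases "y = length lam + 1")
  case True
  then show ?thesis by (auto simp: add_cell_def part_def fun_eq_iff nth_append)
next
  case False
  then have "y \<le> length lam" using assms by simp
  have pv: "part lam y = lam ! (y - 1)" using \<open>y \<le> length lam\<close> assms by (simp add: part_def)
  have "add_cell lam y = lam[y - 1 := Suc (lam ! (y - 1))]" using False by (simp add: add_cell_def)
  then show ?thesis using part_update[OF assms(2) \<open>y \<le> length lam\<close>] pv by simp
qed

lemma add_cell_zf:
  assumes "is_partition lam" "1 \<le> y" "y \<le> length lam + 1"
  shows "0 \<notin> set (add_cell lam y)"
proof (cases "y = length lam + 1")
  case True
  then show ?thesis using assms(1) by (simp add: add_cell_def is_partition_def)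
next
  case False
  then have "y \<le> length lam" using assms by simp
  then show ?thesis using assms False
    by (auto simp: add_cell_def is_partition_def dest: set_update_subset_insert[THEN subsetD])
qed

lemma add_cell_onecell:
  assumes pl: "is_partition lam" and y: "1 \<le> y" "y \<le> length lam + 1"
    and c: "y = 1 \<or> part lam y < part lam (y - 1)"
  shows "onecell lam (add_cell lam y) y"
proof -
  have P: "part (add_cell lam y) = (part lam)(y := Suc (part lam y))" by (rule add_cell_part[OF assms(1-3)])
  have "is_partition (add_cell lam y)"
  proof (rule partition_of_part[OF add_cell_zf[OF assms(1-3)]])
    fix z :: nat assume z: "1 \<le> z"
    have m: "part lam (Suc z) \<le> part lam z" using part_mono[OF pl z] by simp
    show "part (add_cell lam y) (Suc z) \<le> part (add_cell lam y) z"
      using m c z unfolding P by auto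
  qed
  then show ?thesis using pl y P by (unfold_locales) auto
qed

lemma remove_cell_part:
  assumes pl: "is_partition lam" and y: "1 \<le> y" "y \<le> length lam"
    and c: "part lam (Suc y) < part lam y"
  shows "part (remove_cell lam y) = (part lam)(y := part lam y - 1)"
    and "0 \<notin> set (remove_cell lam y)"
proof -
  have zf: "0 \<notin> set lam" using pl by (simp add: is_partition_def)
  have "part (remove_cell lam y) = (part lam)(y := part lam y - 1) \<and> 0 \<notin> set (remove_cell lam y)"
  proof (cases "part lam y = 1")
    case True
    then have "part lam (Suc y) = 0" using c by simp
    then have yl: "y = length lam" using part_pos[OF pl, of "Suc y"] y by (cases "Suc y \<le> length lam") auto
    then obtain xs a where xs: "lam = xs @ [a]" using y by (metis append_butlast_last_id le_zero_eq length_0_conv not_one_le_zero)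
    have len: "length xs = y - 1" using yl xs by simp
    have upd: "lam[y - 1 := lam ! (y - 1) - 1] = xs @ [0]" using True xs len y by (simp add: part_def list_update_append)
    have fx: "filter (\<lambda>p. 0 < p) xs = xs" using zf xs by (auto simp: filter_id_conv intro: gr0I)
    have R: "remove_cell lam y = xs" unfolding remove_cell_def upd using fx by simp
    show ?thesis unfolding R
    proof
      show "part xs = (part lam)(y := part lam y - 1)"
        using True len xs y by (auto simp: part_def fun_eq_iff nth_append)
      show "0 \<notin> set xs" using zf xs by simp
    qed
  next
    case False
    then have pos: "lam ! (y - 1) - 1 > 0" using part_pos[OF pl y] y by (simp add: part_def)
    have nz: "\<forall>p\<in>set (lam[y - 1 := lam ! (y - 1) - 1]). 0 < p"
      using zf pos by (auto dest: set_update_subset_insert[THEN subsetD] intro: gr0I)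
    then have R: "remove_cell lam y = lam[y - 1 := lam ! (y - 1) - 1]"
      unfolding remove_cell_def by (simp add: filter_id_conv)
    show ?thesis unfolding R using part_update[OF y] y nz by (auto simp: part_def)
  qed
  then show "part (remove_cell lam y) = (part lam)(y := part lam y - 1)"
    "0 \<notin> set (remove_cell lam y)" by auto
qed

lemma remove_cell_onecell:
  assumes pl: "is_partition lam" and y: "1 \<le> y" "y \<le> length lam"
    and c: "part lam (Suc y) < part lam y"
  shows "onecell (remove_cell lam y) lam y"
proof -
  note P = remove_cell_part(1)[OF assms]
  have "is_partition (remove_cell lam y)"
  proof (rule partition_of_part[OF remove_cell_part(2)[OF assms]])
    fix z :: nat assume z: "1 \<le> z"
    have m: "part lam (Suc z) \<le> part lam z" using part_mono[OF pl z] by simp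
    have m2: "part lam y \<le> part lam (y - 1)" if "y \<ge> 2" using part_mono[of lam "y - 1" y] pl that by simp
    show "part (remove_cell lam y) (Suc z) \<le> part (remove_cell lam y) z"
      using m c z m2 unfolding P by auto
  qed
  moreover have "0 < part lam y" using part_pos[OF pl y] .
  ultimately show ?thesis using pl y P by (unfold_locales) auto
qed



locale ptn =
  fixes lam :: "nat list"
  assumes pl: "is_partition lam"
begin

abbreviation "u \<equiv> usizes lam"
abbreviation "d \<equiv> ndist lam"

definition Uf :: "nat \<Rightarrow> nat" where
  "Uf s = (if 1 \<le> s \<and> s \<le> d then u ! (s - 1) else 0)"

lemma zf: "0 \<notin> set lam" using pl by (simp add: is_partition_def)

lemma u_set: "set u = set lam"
  by (simp add: usizes_def)

lemma u_len: "length u = d"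
  by (simp add: usizes_def ndist_def)

lemma u_sorted: "sorted_wrt (>) u"
  using strict_sorted_list_of_set[of "set lam"] by (simp add: usizes_def sorted_wrt_rev)

lemma u_less: "i < j \<Longrightarrow> j < d \<Longrightarrow> u ! j < u ! i"
  using sorted_wrt_nth_less[OF u_sorted] u_len by simp

lemma Uf_in: "1 \<le> s \<Longrightarrow> s \<le> d \<Longrightarrow> Uf s \<in> set lam"
  using u_set u_len nth_mem[of "s - 1" u] by (simp add: Uf_def)

lemma Uf_pos: "1 \<le> s \<Longrightarrow> s \<le> d \<Longrightarrow> 0 < Uf s"
  using Uf_in zf by (metis gr0I)

lemma Uf_dec: assumes "1 \<le> s" "s < s'" "s' \<le> d + 1" shows "Uf s' < Uf s"
proof (cases "s' \<le> d")
  case True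
  then show ?thesis using assms u_less[of "s - 1" "s' - 1"] by (simp add: Uf_def)
next
  case False
  then have "Uf s' = 0" by (simp add: Uf_def)
  then show ?thesis using Uf_pos[of s] assms by simp
qed

lemma Uf_anti: "1 \<le> s \<Longrightarrow> s \<le> s' \<Longrightarrow> s' \<le> d + 1 \<Longrightarrow> Uf s' \<le> Uf s"
  using Uf_dec by (cases "s = s'") (auto intro: less_imp_le)

lemma set_lam_Uf: assumes "x \<in> set lam" obtains s where "1 \<le> s" "s \<le> d" "x = Uf s"
proof -
  from assms u_set obtain i where "i < length u" "u ! i = x" by (metis in_set_conv_nth)
  then show ?thesis using that[of "Suc i"] u_len by (simp add: Uf_def)
qed

lemma Ugap: assumes "x \<in> set lam" "1 \<le> s" "s \<le> d" "x < Uf s" shows "x \<le> Uf (s + 1)"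
proof -
  obtain k where k: "1 \<le> k" "k \<le> d" "x = Uf k" using set_lam_Uf[OF assms(1)] .
  have "s < k" using Uf_anti[of k s] k assms by (cases "k \<le> s") auto
  then show ?thesis using Uf_anti[of "s + 1" k] k assms by simp
qed

lemma v1_eq: "s \<le> d \<Longrightarrow> v1 lam s = (if s = 0 then 0 else NN lam (Uf s))"
  by (simp add: v1_def Uf_def NN_def)

lemma part_ex: assumes "x \<in> set lam" obtains y where "1 \<le> y" "y \<le> length lam" "part lam y = x"
proof -
  from assms obtain i where "i < length lam" "lam ! i = x" by (metis in_set_conv_nth)
  then show ?thesis using that[of "Suc i"] by (simp add: part_def)
qed

lemma VA: assumes "1 \<le> s" "s \<le> d"
  shows "1 \<le> v1 lam s" "v1 lam s \<le> length lam" "part lam (v1 lam s) = Uf s"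
proof -
  define x where "x = Uf s"
  have x1: "1 \<le> x" using Uf_pos[OF assms] by (simp add: x_def)
  obtain y where y: "1 \<le> y" "y \<le> length lam" "part lam y = x" using part_ex Uf_in[OF assms] x_def by metis
  have V: "v1 lam s = NN lam x" using v1_eq[OF assms(2)] assms by (simp add: x_def)
  have "y \<le> NN lam x" using galois[OF pl x1 y(1)] y by simp
  then have n1: "1 \<le> NN lam x" using y by simp
  have "x \<le> part lam (NN lam x)" using galois[OF pl x1 n1] by simp
  moreover have "part lam (NN lam x) \<le> x" using part_mono[OF pl y(1) \<open>y \<le> NN lam x\<close>] y by simp
  ultimately show "1 \<le> v1 lam s" "v1 lam s \<le> length lam" "part lam (v1 lam s) = Uf s"
    using n1 NN_le[of lam x] V x_def by auto
qed

lemma Vmono: assumes "s < s'" "s' \<le> d" shows "v1 lam s < v1 lam s'"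
proof (cases "s = 0")
  case True
  have "v1 lam 0 = 0" by (simp add: v1_def)
  moreover have "1 \<le> v1 lam s'" using VA(1)[of s'] assms True by simp
  ultimately show ?thesis using True by simp
next
  case False
  have "Uf s' < Uf s" using Uf_dec[of s s'] assms False by simp
  then have "NN lam (Uf s) \<le> NN lam (Uf s')" by (intro NN_anti) simp
  then have le: "v1 lam s \<le> v1 lam s'" using v1_eq assms False by simp
  have "v1 lam s \<noteq> v1 lam s'" using VA(3)[of s] VA(3)[of s'] assms False \<open>Uf s' < Uf s\<close> by auto
  with le show ?thesis by simp
qed

lemma d0: "d = 0 \<Longrightarrow> lam = []"
  by (simp add: ndist_def)

lemma Vd: "v1 lam d = length lam"
proof (cases "d = 0")
  case True then show ?thesis using d0 by (simp add: v1_def)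
next
  case False
  have "\<forall>p\<in>set lam. Uf d \<le> p"
  proof
    fix p assume "p \<in> set lam"
    then obtain k where "1 \<le> k" "k \<le> d" "p = Uf k" by (rule set_lam_Uf)
    then show "Uf d \<le> p" using Uf_anti[of k d] by simp
  qed
  then show ?thesis using False v1_eq[of d] by (simp add: NN_def filter_True)
qed

lemma VB: assumes "s \<le> d" shows "part lam (v1 lam s + 1) = Uf (s + 1)"
proof -
  consider "s = d" | "s < d" "s = 0" | "s < d" "1 \<le> s" using assms by linarith
  then show ?thesis
  proof cases
    case 1
    then show ?thesis using Vd by (simp add: part_def Uf_def)
  next
    case 2
    then have ne: "lam \<noteq> []" by (auto simp: ndist_def)
    have "part lam 1 \<in> set lam" using ne by (intro part_in) (auto simp: Suc_le_eq)
    then obtain k where k: "1 \<le> k" "k \<le> d" "part lam 1 = Uf k" by (rule set_lam_Uf)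
    have a: "part lam 1 \<le> Uf 1" using Uf_anti[of 1 k] k by simp
    obtain y where y: "1 \<le> y" "y \<le> length lam" "part lam y = Uf 1" using part_ex Uf_in[of 1] 2 by (metis le_refl less_one not_le)
    have "part lam y \<le> part lam 1" using part_mono[OF pl _ y(1)] by simp
    then show ?thesis using a y 2 by (simp add: v1_def)
  next
    case 3
    define n where "n = v1 lam s"
    have "n + 1 \<le> v1 lam (s + 1)" using Vmono[of s "s + 1"] 3 by (simp add: n_def)
    then have ge: "Uf (s + 1) \<le> part lam (n + 1)"
      using part_mono[OF pl _ \<open>n + 1 \<le> v1 lam (s + 1)\<close>] VA(3)[of "s + 1"] 3 by simp
    have n1: "1 \<le> n + 1" by simp
    have "\<not> (n + 1 \<le> NN lam (Uf s))" using v1_eq[of s] 3 by (simp add: n_def)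
    then have lt: "part lam (n + 1) < Uf s" using galois[OF pl _ n1, of "Uf s"] Uf_pos[of s] 3 by simp
    have pos: "0 < part lam (n + 1)" using ge Uf_pos[of "s + 1"] 3 by simp
    then have "n + 1 \<le> length lam" using part_pos_iff[OF pl n1] by simp
    then have "part lam (n + 1) \<in> set lam" by (intro part_in) simp_all
    then have "part lam (n + 1) \<le> Uf (s + 1)" using Ugap lt 3 by simp
    with ge show ?thesis by (simp add: n_def)
  qed
qed

lemma VD: assumes "s \<le> d" shows "NN lam (Uf (s + 1) + 1) = v1 lam s"
proof (rule nat_eq_ge1)
  fix z :: nat assume z: "1 \<le> z"
  have "z \<le> NN lam (Uf (s + 1) + 1) \<longleftrightarrow> Uf (s + 1) + 1 \<le> part lam z" using galois[OF pl _ z] by simp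
  also have "\<dots> \<longleftrightarrow> z \<le> v1 lam s"
  proof
    assume a: "Uf (s + 1) + 1 \<le> part lam z"
    show "z \<le> v1 lam s"
    proof (rule ccontr)
      assume "\<not> z \<le> v1 lam s"
      then have "part lam z \<le> part lam (v1 lam s + 1)" using part_mono[OF pl, of "v1 lam s + 1" z] by simp
      then show False using a VB[OF assms] by simp
    qed
  next
    assume a: "z \<le> v1 lam s"
    then have s1: "1 \<le> s" using z by (cases "s = 0") (auto simp: v1_def)
    have "part lam (v1 lam s) \<le> part lam z" using part_mono[OF pl z a] .
    then have "Uf s \<le> part lam z" using VA(3)[OF s1 assms] by simp
    moreover have "Uf (s + 1) < Uf s" using Uf_dec[of s "s + 1"] s1 assms by simp
    ultimately show "Uf (s + 1) + 1 \<le> part lam z" by simp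
  qed
  finally show "z \<le> NN lam (Uf (s + 1) + 1) \<longleftrightarrow> z \<le> v1 lam s" .
qed

abbreviation "M \<equiv> Max (insert 0 (set lam))"

lemma conj_len: "length (conj_part lam) = M"
  by (simp add: conj_part_def)

lemma conj_map: "conj_part lam = map (NN lam) [1..<Suc M]"
  by (simp add: conj_part_def NN_def)

lemma Uf_le_M: "Uf s \<le> M"
proof (cases "1 \<le> s \<and> s \<le> d")
  case True then show ?thesis using Uf_in[of s] by (intro Max_ge) auto
next
  case False then show ?thesis by (auto simp: Uf_def)
qed

lemma NN_part_NN: assumes x: "1 \<le> x" and y: "1 \<le> NN lam x"
  shows "NN lam x = NN lam (part lam (NN lam x))"
proof (rule nat_eq_ge1)
  fix z :: nat assume z: "1 \<le> z"
  have px: "x \<le> part lam (NN lam x)" using galois[OF pl x y] by simp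
  have p1: "1 \<le> part lam (NN lam x)" using px x by simp
  show "z \<le> NN lam x \<longleftrightarrow> z \<le> NN lam (part lam (NN lam x))"
  proof
    assume "z \<le> NN lam x"
    then have "part lam (NN lam x) \<le> part lam z" using part_mono[OF pl z] by simp
    then show "z \<le> NN lam (part lam (NN lam x))" using galois[OF pl p1 z] by simp
  next
    assume "z \<le> NN lam (part lam (NN lam x))"
    then have "part lam (NN lam x) \<le> part lam z" using galois[OF pl p1 z] by simp
    then show "z \<le> NN lam x" using galois[OF pl x z] px by simp
  qed
qed

lemma conj_set: "set (conj_part lam) = v1 lam ` {1..d}"
proof
  show "set (conj_part lam) \<subseteq> v1 lam ` {1..d}"
  proof
    fix v assume "v \<in> set (conj_part lam)"
    then obtain x where x: "1 \<le> x" "x \<le> M" "v = NN lam x" unfolding conj_map by auto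
    then have "M \<noteq> 0" by simp
    then have "M \<in> set lam" using Max_in[of "insert 0 (set lam)"] by auto
    then obtain y where y: "1 \<le> y" "y \<le> length lam" "part lam y = M" by (rule part_ex)
    have "y \<le> NN lam x" using galois[OF pl x(1) y(1)] x y by simp
    then have n1: "1 \<le> NN lam x" using y by simp
    have "part lam (NN lam x) \<in> set lam" using n1 NN_le[of lam x] by (intro part_in) simp_all
    then obtain s where s: "1 \<le> s" "s \<le> d" "part lam (NN lam x) = Uf s" by (rule set_lam_Uf)
    have "v = v1 lam s" using NN_part_NN[OF x(1) n1] s v1_eq[of s] x by simp
    then show "v \<in> v1 lam ` {1..d}" using s by auto
  qed
next
  show "v1 lam ` {1..d} \<subseteq> set (conj_part lam)"
  proof
    fix v assume "v \<in> v1 lam ` {1..d}"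
    then obtain s where s: "1 \<le> s" "s \<le> d" "v = v1 lam s" by auto
    then have "v = NN lam (Uf s)" using v1_eq by simp
    moreover have "1 \<le> Uf s" "Uf s \<le> M" using Uf_pos[OF s(1,2)] Uf_le_M[of s] by auto
    moreover have "Uf s \<in> set [1..<Suc M]" using calculation by (simp add: less_Suc_eq_le del: upt_Suc)
    ultimately show "v \<in> set (conj_part lam)" unfolding conj_map set_map by blast
  qed
qed

lemma V_inj: "inj_on (v1 lam) {1..d}"
  by (rule inj_onI) (metis Vmono atLeastAtMost_iff less_irrefl nat_neq_iff)

lemma conj_ndist: "ndist (conj_part lam) = d"
proof -
  have "ndist (conj_part lam) = card (set (conj_part lam))" by (simp only: ndist_def)
  also have "\<dots> = card (v1 lam ` {1..d})" by (simp only: conj_set)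
  also have "\<dots> = d" using card_image[OF V_inj] by simp
  finally show ?thesis .
qed

lemma conj_usizes: "usizes (conj_part lam) = rev (map (v1 lam) [1..<Suc d])"
proof -
  have "sorted_list_of_set (v1 lam ` {1..d}) = map (v1 lam) [1..<Suc d]"
  proof (subst sorted_list_of_set_unique[symmetric])
    show "finite (v1 lam ` {1..d})" by simp
    have "sorted_wrt (<) (map (v1 lam) [1..<Suc d])"
      unfolding sorted_wrt_map by (rule sorted_wrt_mono_rel[OF _ sorted_wrt_upt]) (auto intro: Vmono)
    moreover have "set (map (v1 lam) [1..<Suc d]) = v1 lam ` {1..d}" by auto
    moreover have "length (map (v1 lam) [1..<Suc d]) = card (v1 lam ` {1..d})"
      using card_image[OF V_inj] by simp
    ultimately show "sorted_wrt (<) (map (v1 lam) [1..<Suc d]) \<and> set (map (v1 lam) [1..<Suc d]) = v1 lam ` {1..d}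
      \<and> length (map (v1 lam) [1..<Suc d]) = card (v1 lam ` {1..d})" by blast
  qed
  then show ?thesis by (simp add: usizes_def conj_set)
qed

lemma conj_v1: assumes "1 \<le> j" "j \<le> d" shows "v1 (conj_part lam) j = Uf (d + 1 - j)"
proof -
  have "usizes (conj_part lam) ! (j - 1) = v1 lam (d + 1 - j)"
    unfolding conj_usizes using assms by (simp add: rev_nth nth_map Suc_diff_le del: upt_Suc)
  then have "v1 (conj_part lam) j = NN (conj_part lam) (v1 lam (d + 1 - j))"
    using assms by (simp add: v1_def NN_def)
  also have "\<dots> = part (conj_part (conj_part lam)) (v1 lam (d + 1 - j))"
    using part_conj[of "v1 lam (d + 1 - j)" "conj_part lam"] VA(1)[of "d + 1 - j"] assms by simp
  also have "\<dots> = Uf (d + 1 - j)" using conj_conj[OF pl] VA(3)[of "d + 1 - j"] assms by simp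
  finally show ?thesis .
qed

end



context ptn
begin

lemma plus_conj: assumes s: "s \<le> d"
  shows "onecell lam (lam_plus lam s) (v1 lam s + 1)"
    and "lam_plus (conj_part lam) (d - s) = conj_part (lam_plus lam s)"
proof -
  define Y where "Y = v1 lam s + 1"
  have Yle: "Y \<le> length lam + 1"
  proof (cases "s = 0")
    case True then show ?thesis by (simp add: Y_def v1_def)
  next
    case False then show ?thesis using VA(2)[of s] s by (simp add: Y_def)
  qed
  have c: "Y = 1 \<or> part lam Y < part lam (Y - 1)"
  proof (cases "s = 0")
    case True then show ?thesis by (simp add: Y_def v1_def)
  next
    case False
    have "part lam Y = Uf (s + 1)" using VB[OF s] by (simp add: Y_def)
    moreover have "part lam (Y - 1) = Uf s" using VA(3)[of s] s False by (simp add: Y_def)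
    moreover have "Uf (s + 1) < Uf s" using Uf_dec[of s "s + 1"] s False by simp
    ultimately show ?thesis by simp
  qed
  have oc: "onecell lam (add_cell lam Y) Y" by (rule add_cell_onecell[OF pl _ Yle c]) (simp add: Y_def)
  then show "onecell lam (lam_plus lam s) (v1 lam s + 1)" by (simp add: lam_plus_def Y_def)
  define Y' where "Y' = Uf (s + 1) + 1"
  have v1c: "v1 (conj_part lam) (d - s) = Uf (s + 1)"
  proof (cases "d - s = 0")
    case True then have "s = d" using s by simp
    then show ?thesis by (simp add: v1_def Uf_def)
  next
    case False then show ?thesis using conj_v1[of "d - s"] s by simp
  qed
  have L: "lam_plus (conj_part lam) (d - s) = add_cell (conj_part lam) Y'"
    unfolding lam_plus_def conj_ndist v1c Y'_def ..
  have Y'le: "Y' \<le> length (conj_part lam) + 1" using Uf_le_M[of "s + 1"] conj_len by (simp add: Y'_def)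
  have Y'1: "1 \<le> Y'" by (simp add: Y'_def)
  have P1: "part (add_cell (conj_part lam) Y') = (part (conj_part lam))(Y' := Suc (part (conj_part lam) Y'))"
    by (rule add_cell_part[OF conj_partition Y'1 Y'le])
  have x0: "onecell.x0 lam Y = Y'"
    using onecell.x0_def[OF oc] VB[OF s] by (simp add: Y_def Y'_def)
  have P2: "part (conj_part (add_cell lam Y)) = (part (conj_part lam))(Y' := Suc (part (conj_part lam) Y'))"
    using onecell.conj_nu[OF oc] x0 by simp
  have "add_cell (conj_part lam) Y' = conj_part (add_cell lam Y)"
    by (rule list_eq_part[OF add_cell_zf[OF conj_partition Y'1 Y'le] partition_zero_free[OF conj_partition]])
       (simp add: P1 P2)
  then show "lam_plus (conj_part lam) (d - s) = conj_part (lam_plus lam s)"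
    unfolding L by (simp add: lam_plus_def Y_def)
qed

lemma minus_conj: assumes r: "1 \<le> r" "r \<le> d"
  shows "onecell (lam_minus lam r) lam (v1 lam r)"
    and "lam_minus (conj_part lam) (d + 1 - r) = conj_part (lam_minus lam r)"
proof -
  define Y where "Y = v1 lam r"
  have Y1: "1 \<le> Y" and Yle: "Y \<le> length lam" and pY: "part lam Y = Uf r"
    using VA[OF r] by (simp_all add: Y_def)
  have c: "part lam (Suc Y) < part lam Y"
    using VB[of r] r Uf_dec[of r "r + 1"] pY by (simp add: Y_def)
  have mu: "lam_minus lam r = remove_cell lam Y" using r by (simp add: lam_minus_def Y_def)
  have oc: "onecell (remove_cell lam Y) lam Y" by (rule remove_cell_onecell[OF pl Y1 Yle c])
  then show "onecell (lam_minus lam r) lam (v1 lam r)" by (simp add: mu Y_def)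
  have v1c: "v1 (conj_part lam) (d + 1 - r) = Uf r" using conj_v1[of "d + 1 - r"] r by simp
  have L: "lam_minus (conj_part lam) (d + 1 - r) = remove_cell (conj_part lam) (Uf r)"
    using r unfolding lam_minus_def conj_ndist v1c by simp
  have U1: "1 \<le> Uf r" using Uf_pos[OF r] by simp
  have Ule: "Uf r \<le> length (conj_part lam)" using Uf_le_M[of r] conj_len by simp
  have a1: "part (conj_part lam) (Suc (Uf r)) = v1 lam (r - 1)"
    using part_conj[of "Suc (Uf r)" lam] VD[of "r - 1"] r by simp
  have a2: "part (conj_part lam) (Uf r) = v1 lam r"
    using part_conj[OF U1, of lam] v1_eq[of r] r by simp
  have c': "part (conj_part lam) (Suc (Uf r)) < part (conj_part lam) (Uf r)"
    unfolding a1 a2 using Vmono[of "r - 1" r] r by simp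
  have P1: "part (remove_cell (conj_part lam) (Uf r)) = (part (conj_part lam))(Uf r := part (conj_part lam) (Uf r) - 1)"
    by (rule remove_cell_part(1)[OF conj_partition U1 Ule c'])
  have pm: "part (remove_cell lam Y) Y = Uf r - 1"
    using remove_cell_part(1)[OF pl Y1 Yle c] pY by simp
  have x0: "onecell.x0 (remove_cell lam Y) Y = Uf r"
    using onecell.x0_def[OF oc] pm U1 by simp
  have P2: "part (conj_part lam) = (part (conj_part (remove_cell lam Y)))(Uf r := Suc (part (conj_part (remove_cell lam Y)) (Uf r)))"
    using onecell.conj_nu[OF oc] x0 by simp
  have P3: "part (remove_cell (conj_part lam) (Uf r)) = part (conj_part (remove_cell lam Y))"
    unfolding P1 by (subst (1 2) P2) (auto simp: fun_eq_iff)
  have "remove_cell (conj_part lam) (Uf r) = conj_part (remove_cell lam Y)"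
    by (rule list_eq_part[OF remove_cell_part(2)[OF conj_partition U1 Ule c'] partition_zero_free[OF conj_partition] P3])
  then show "lam_minus (conj_part lam) (d + 1 - r) = conj_part (lam_minus lam r)"
    unfolding L mu .
qed

end

theorem lemma5p2:
  fixes lam :: "nat list" and r s d :: nat and q t :: real
  assumes "is_partition lam"
    and "d = ndist lam"
    and "r \<le> d" and "s \<le> d"
    and "0 < q" and "0 < t"
    and "\<forall>i j :: int. (i, j) \<noteq> (0, 0) \<longrightarrow> q powi i * t powi j \<noteq> 1"
  shows "prs r s lam t q = prs_col ((d + 1 - r) mod (d + 1)) (d - s) (conj_part lam) q t
       \<and> prsbar r s lam t q = prsbar_col ((d + 1 - r) mod (d + 1)) (d - s) (conj_part lam) q t"
proof -
  interpret ptn lam by unfold_locales (rule assms(1))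
  have q0: "q \<noteq> 0" and t0: "t \<noteq> 0" using assms(5,6) by auto
  have q1: "q \<noteq> 1" using spec[OF spec[OF assms(7), of 1], of 0] by simp
  have t1: "t \<noteq> 1" using spec[OF spec[OF assms(7), of 0], of 1] by simp
  note pc = plus_conj[OF assms(4)[unfolded assms(2)]]
  show ?thesis
  proof (cases "r = 0")
    case True
    have m: "(d + 1 - r) mod (d + 1) = 0" using True by simp
    show ?thesis unfolding m prs_col_def prsbar_col_def prs_def prsbar_def
      using True pc(2) P0_conj[OF pc(1) q0 t0] P0bar_conj[OF pc(1) q0 t0] assms(2) by simp
  next
    case False
    then have r1: "1 \<le> r" by simp
    note mc = minus_conj[OF r1 assms(3)[unfolded assms(2)]]
    have m: "(d + 1 - r) mod (d + 1) = d + 1 - r" using r1 assms(3) by simp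
    have m0: "d + 1 - r \<noteq> 0" using assms(3) by simp
    show ?thesis unfolding m prs_col_def prsbar_col_def prs_def prsbar_def
      using False m0 pc(2) mc(2) assms(2)
        P1_conj[OF mc(1) pc(1) q0 q1 t0 t1] P1bar_conj[OF mc(1) pc(1) q0 q1 t0 t1] by simp
  qed
qed

end
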